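(* Let $\Sigma$ be a simply connected minimal surface in $\mathbb{R}^3$, parametrized (up to translations) by the conformal harmonic immersion \[ \mathbf{X}(\zeta)=\Big(\mathrm{Re}\int\phi_1(\zeta)\,d\zeta,\ \mathrm{Re}\int\phi_2(\zeta)\,d\zeta,\ \mathrm{Re}\int\phi_3(\zeta)\,d\zeta\Big), \] where $\zeta$ is a conformal coordinate and the holomorphic null curve $\phi=(\phi_1,\phi_2,\phi_3)$ is given in terms of Weierstrass data $(G(\zeta),\Psi(\zeta)\,d\zeta)$ by \[ \phi=\Big(\tfrac12(1-G^2)\Psi,\ \tfrac{i}{2}(1+G^2)\Psi,\ G\Psi\Big). \] For each $\theta\in(-\frac{\pi}{2},\frac{\pi}{2})$ define the holomorphic curve \[ \widetilde{\phi}=(\widetilde{\phi}_0,\widetilde{\phi}_1,\widetilde{\phi}_2,\widetilde{\phi}_3)=\Big(\frac{\sin\theta}{2}\Big(1+\frac{G^2}{\cos^2\theta}\Big)\Psi,\ \frac{\cos\theta}{2}\Big(1-\frac{G^2}{\cos^2\theta}\Big)\Psi,\ \frac{i}{2}\Big(1+\frac{G^2}{\cos^2\theta}\Big)\Psi,\ G\Psi\Big) \] (so that $\widetilde{\phi}_0=-i(\sin\theta)\,\widetilde{\phi}_2$). Then there exists a degenerate minimal surface $\Sigma^{\tan\theta}$ in $\mathbb{R}^4$, parametrized (up to translations) by the conformal harmonic immersion \[ \mathbf{X}^{\tan\theta}(\zeta)=\Big(\mathrm{Re}\int\widetilde{\phi}_0\,d\zeta,\ \mathrm{Re}\int\widetilde{\phi}_1\,d\zeta,\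 \mathrm{Re}\int\widetilde{\phi}_2\,d\zeta,\ \mathrm{Re}\int\widetilde{\phi}_3\,d\zeta\Big). \]
   Context: For a conformal harmonic immersion $\mathbf{X}:\Sigma\to\mathbb{R}^4$ with local conformal coordinate $\zeta$, its Gauss map is $\mathcal{G}(\zeta)=[\partial\mathbf{X}/\partial\zeta]\in\mathbb{CP}^3$, taking values in the quadric $\{z_0^2+z_1^2+z_2^2+z_3^2=0\}$. The minimal surface is called degenerate if the image of its Gauss map lies in a hyperplane of $\mathbb{CP}^3$. *)

theory Defs
  imports "HOL-Complex_Analysis.Complex_Analysis"
begin

definition harmonic_on :: "complex set \<Rightarrow> (complex \<Rightarrow> real) \<Rightarrow> bool" where
  "harmonic_on \<Omega> u \<longleftrightarrow> open \<Omega> \<and>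
     (\<exists>ux uy uxx uxy uyx uyy.
        (\<forall>z\<in>\<Omega>. (u has_derivative (\<lambda>h. Re h * ux z + Im h * uy z)) (at z)
               \<and> (ux has_derivative (\<lambda>h. Re h * uxx z + Im h * uxy z)) (at z)
               \<and> (uy has_derivative (\<lambda>h. Re h * uyx z + Im h * uyy z)) (at z)
               \<and> uxx z + uyy z = 0)
        \<and> continuous_on \<Omega> uxx \<and> continuous_on \<Omega> uxy
        \<and> continuous_on \<Omega> uyx \<and> continuous_on \<Omega> uyy)"

text \<open>Complex derivative dX/d zeta = (X_x - i X_y)/2, the representative of the Gauss map.\<close>
definition dzeta :: "(complex \<Rightarrow> real^'n) \<Rightarrow> complex \<Rightarrow> complex^'n" where
  "dzeta X z = (\<chi> k. (complex_of_real (frechet_derivative X (at z) 1 $ k)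
                       - \<i> * complex_of_real (frechet_derivative X (at z) \<i> $ k)) / 2)"

definition conformal_harmonic_immersion :: "complex set \<Rightarrow> (complex \<Rightarrow> real^'n) \<Rightarrow> bool" where
  "conformal_harmonic_immersion \<Omega> X \<longleftrightarrow> open \<Omega> \<and>
     (\<forall>z\<in>\<Omega>. X differentiable (at z)) \<and>
     (\<forall>k. harmonic_on \<Omega> (\<lambda>z. X z $ k)) \<and>
     (\<forall>z\<in>\<Omega>. norm (frechet_derivative X (at z) 1) = norm (frechet_derivative X (at z) \<i>)
             \<and> frechet_derivative X (at z) 1 \<bullet> frechet_derivative X (at z) \<i> = 0
             \<and> inj (frechet_derivative X (at z)))"

text \<open>X = Re \<integral> phi d zeta (up to translation): dX_k(z) h = Re (phi_k(z) h).\<close>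
definition re_integral_of :: "complex set \<Rightarrow> (complex \<Rightarrow> real^'n) \<Rightarrow> (complex \<Rightarrow> complex^'n) \<Rightarrow> bool" where
  "re_integral_of \<Omega> X \<phi> \<longleftrightarrow>
     (\<forall>z\<in>\<Omega>. \<forall>k. ((\<lambda>w. X w $ k) has_derivative (\<lambda>h. Re (\<phi> z $ k * h))) (at z))"

definition holomorphic_curve_on :: "(complex \<Rightarrow> complex^'n) \<Rightarrow> complex set \<Rightarrow> bool" where
  "holomorphic_curve_on \<phi> \<Omega> \<longleftrightarrow> (\<forall>k. (\<lambda>z. \<phi> z $ k) holomorphic_on \<Omega>)"

text \<open>Degenerate: the image of the Gauss map [dX/d zeta] lies in a hyperplane of CP^(n-1).\<close>
definition degenerate_on :: "complex set \<Rightarrow> (complex \<Rightarrow> real^'n) \<Rightarrow> bool" where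
  "degenerate_on \<Omega> X \<longleftrightarrow>
     (\<exists>a::complex^'n. a \<noteq> 0 \<and> (\<forall>z\<in>\<Omega>. (\<Sum>k\<in>UNIV. a $ k * dzeta X z $ k) = 0))"

end

theory Submission imports Defs begin

lemma has_derivative_vec_iff:
  fixes f :: "'a::real_normed_vector \<Rightarrow> real^'n"
  shows "(f has_derivative f') (at a) \<longleftrightarrow> (\<forall>i. ((\<lambda>x. f x $ i) has_derivative (\<lambda>h. f' h $ i)) (at a))"
  using has_derivative_componentwise_within[of f f' a UNIV]
  by (simp add: Basis_vec_def inner_axis)

lemma re_integral_frechet:
  fixes X :: "complex \<Rightarrow> real^'n"
  assumes "re_integral_of \<Omega> X \<phi>" "z \<in> \<Omega>"
  shows "(X has_derivative (\<lambda>h. \<chi> k. Re (\<phi> z $ k * h))) (at z)"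
    and "frechet_derivative X (at z) = (\<lambda>h. \<chi> k. Re (\<phi> z $ k * h))"
proof -
  show 1: "(X has_derivative (\<lambda>h. \<chi> k. Re (\<phi> z $ k * h))) (at z)"
    using assms unfolding re_integral_of_def by (simp add: has_derivative_vec_iff)
  then show "frechet_derivative X (at z) = (\<lambda>h. \<chi> k. Re (\<phi> z $ k * h))"
    by (metis frechet_derivative_at)
qed

lemma null_iff:
  fixes v :: "complex^'n"
  shows "(\<Sum>k\<in>UNIV. (v$k)\<^sup>2) = 0 \<longleftrightarrow>
     (\<Sum>k\<in>UNIV. (Re(v$k))\<^sup>2) = (\<Sum>k\<in>UNIV. (Im (v$k))\<^sup>2) \<and> (\<Sum>k\<in>UNIV. Re(v$k)*Im(v$k)) = 0"
proof -
  have r: "Re (\<Sum>k\<in>UNIV. (v$k)\<^sup>2) = (\<Sum>k\<in>UNIV. (Re(v$k))\<^sup>2) - (\<Sum>k\<in>UNIV. (Im (v$k))\<^sup>2)"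
    by (simp add: Re_sum power2_eq_square sum_subtractf)
  have i: "Im (\<Sum>k\<in>UNIV. (v$k)\<^sup>2) = 2 * (\<Sum>k\<in>UNIV. Re(v$k)*Im(v$k))"
    by (simp add: Im_sum power2_eq_square sum_distrib_left ac_simps)
  show ?thesis using r i by (simp add: complex_eq_iff)
qed

lemma conf_iff:
  fixes v :: "complex^'n"
  defines "D \<equiv> (\<lambda>h. \<chi> k. Re (v $ k * h))"
  shows "(\<Sum>k\<in>UNIV. (v$k)\<^sup>2) = 0 \<longleftrightarrow> norm (D 1) = norm (D \<i>) \<and> D 1 \<bullet> D \<i> = 0"
proof -
  have "norm (D 1) = norm (D \<i>) \<longleftrightarrow> D 1 \<bullet> D 1 = D \<i> \<bullet> D \<i>"
    by (simp add: norm_eq_sqrt_inner)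
  moreover have "D 1 \<bullet> D 1 = (\<Sum>k\<in>UNIV. (Re(v$k))\<^sup>2)"
    by (simp add: D_def inner_vec_def power2_eq_square)
  moreover have "D \<i> \<bullet> D \<i> = (\<Sum>k\<in>UNIV. (Im(v$k))\<^sup>2)"
    by (simp add: D_def inner_vec_def power2_eq_square)
  moreover have "D 1 \<bullet> D \<i> = - (\<Sum>k\<in>UNIV. Re(v$k)*Im(v$k))"
    by (simp add: D_def inner_vec_def sum_negf)
  ultimately show ?thesis by (simp add: null_iff)
qed

lemma inj_iff:
  fixes v :: "complex^'n"
  defines "D \<equiv> (\<lambda>h. \<chi> k. Re (v $ k * h))"
  assumes null: "(\<Sum>k\<in>UNIV. (v$k)\<^sup>2) = 0"
  shows "inj D \<longleftrightarrow> v \<noteq> 0"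
proof
  assume "inj D"
  moreover have "v = 0 \<Longrightarrow> D 1 = D 0" by (simp add: D_def)
  ultimately show "v \<noteq> 0" by (metis injD one_neq_zero)
next
  assume v: "v \<noteq> 0"
  show "inj D"
  proof (rule injI, rule ccontr)
    fix h1 h2 assume eq: "D h1 = D h2" and ne: "h1 \<noteq> h2"
    define h where "h = h1 - h2"
    have h0: "h \<noteq> 0" using ne by (simp add: h_def)
    have re0: "Re (v$k * h) = 0" for k
    proof -
      have "Re (v$k*h1) = Re (v$k*h2)" using eq by (simp add: D_def vec_eq_iff)
      then show ?thesis by (simp add: h_def right_diff_distrib)
    qed
    define w where "w = (\<chi> k. v$k * h)"
    have "(\<Sum>k\<in>UNIV. (w$k)\<^sup>2) = h\<^sup>2 * (\<Sum>k\<in>UNIV. (v$k)\<^sup>2)"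
      by (simp add: w_def sum_distrib_left power_mult_distrib mult.commute)
    then have "(\<Sum>k\<in>UNIV. (w$k)\<^sup>2) = 0" using null by simp
    then have "(\<Sum>k\<in>UNIV. (Re(w$k))\<^sup>2) = (\<Sum>k\<in>UNIV. (Im (w$k))\<^sup>2)"
      using null_iff[of w] by blast
    moreover have "Re (w$k) = 0" for k using re0 by (simp add: w_def)
    ultimately have "(\<Sum>k\<in>UNIV. (Im (w$k))\<^sup>2) = 0" by simp
    then have "\<forall>k\<in>UNIV. (Im (w$k))\<^sup>2 = 0"
      by (subst (asm) sum_nonneg_eq_0_iff) auto
    then have "w$k = 0" for k using re0 by (simp add: w_def complex_eq_iff)
    then have "v$k = 0" for k using h0 by (simp add: w_def)
    then have "v = 0" by (simp add: vec_eq_iff)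
    then show False using v by simp
  qed
qed

lemma harmonic_Re_primitive:
  assumes "open \<Omega>" "f holomorphic_on \<Omega>" "\<And>z. z \<in> \<Omega> \<Longrightarrow> (F has_field_derivative f z) (at z)"
  shows "harmonic_on \<Omega> (\<lambda>z. Re (F z))"
proof -
  have dRe: "((\<lambda>w. Re (g w)) has_derivative (\<lambda>h. Re h * Re d + Im h * (- Im d))) (at z)"
    if "(g has_field_derivative d) (at z)" for g d z
  proof -
    have "((\<lambda>w. Re (g w)) has_derivative (\<lambda>h. Re (d * h))) (at z)"
      using has_derivative_Re[OF that[unfolded has_field_derivative_def]] by (simp add: mult.commute)
    then show ?thesis by (simp add: algebra_simps)
  qed
  have dIm: "((\<lambda>w. - Im (g w)) has_derivative (\<lambda>h. Re h * (- Im d) + Im h * (- Re d))) (at z)"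
    if "(g has_field_derivative d) (at z)" for g d z
  proof -
    have "((\<lambda>w. Im (g w)) has_derivative (\<lambda>h. Im (d * h))) (at z)"
      using has_derivative_Im[OF that[unfolded has_field_derivative_def]] by (simp add: mult.commute)
    then have "((\<lambda>w. - Im (g w)) has_derivative (\<lambda>h. - Im (d * h))) (at z)"
      by (rule has_derivative_minus)
    then show ?thesis by (simp add: algebra_simps)
  qed
  have fd: "(f has_field_derivative deriv f z) (at z)" if "z \<in> \<Omega>" for z
    using assms(1,2) that holomorphic_derivI by blast
  have cd: "continuous_on \<Omega> (deriv f)"
    using assms(1,2) holomorphic_deriv holomorphic_on_imp_continuous_on by blast
  show ?thesis unfolding harmonic_on_def
    apply (rule conjI[OF assms(1)])
    apply (rule exI[of _ "\<lambda>z. Re (f z)"], rule exI[of _ "\<lambda>z. - Im (f z)"])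
    apply (rule exI[of _ "\<lambda>z. Re (deriv f z)"], rule exI[of _ "\<lambda>z. - Im (deriv f z)"])
    apply (rule exI[of _ "\<lambda>z. - Im (deriv f z)"], rule exI[of _ "\<lambda>z. - Re (deriv f z)"])
    using dRe dIm assms(3) fd cd
    by (auto intro!: continuous_intros)
qed

theorem corollary5p4:
  fixes \<Omega> :: "complex set"
    and X :: "complex \<Rightarrow> real^3"
    and \<phi> :: "complex \<Rightarrow> complex^3"
    and G \<Psi> :: "complex \<Rightarrow> complex"
    and \<theta> :: real
  assumes "open \<Omega>" and "connected \<Omega>" and "simply_connected \<Omega>"
    and "G meromorphic_on \<Omega>" and "\<Psi> holomorphic_on \<Omega>"
    and "holomorphic_curve_on \<phi> \<Omega>"
    and "\<forall>z\<in>\<Omega>. G analytic_on {z} \<longrightarrow>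
           \<phi> z $ 1 = (1 - (G z)\<^sup>2) * \<Psi> z / 2 \<and>
           \<phi> z $ 2 = \<i> * (1 + (G z)\<^sup>2) * \<Psi> z / 2 \<and>
           \<phi> z $ 3 = G z * \<Psi> z"
    and "conformal_harmonic_immersion \<Omega> X"
    and "re_integral_of \<Omega> X \<phi>"
    and "- (pi / 2) < \<theta>" and "\<theta> < pi / 2"
  shows "\<exists>(\<phi>' :: complex \<Rightarrow> complex^4) (X' :: complex \<Rightarrow> real^4).
           holomorphic_curve_on \<phi>' \<Omega> \<and>
           (\<forall>z\<in>\<Omega>. G analytic_on {z} \<longrightarrow>
              \<phi>' z $ 1 = of_real (sin \<theta>) / 2 * (1 + (G z)\<^sup>2 / of_real ((cos \<theta>)\<^sup>2)) * \<Psi> z \<and>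
              \<phi>' z $ 2 = of_real (cos \<theta>) / 2 * (1 - (G z)\<^sup>2 / of_real ((cos \<theta>)\<^sup>2)) * \<Psi> z \<and>
              \<phi>' z $ 3 = \<i> / 2 * (1 + (G z)\<^sup>2 / of_real ((cos \<theta>)\<^sup>2)) * \<Psi> z \<and>
              \<phi>' z $ 4 = G z * \<Psi> z) \<and>
           conformal_harmonic_immersion \<Omega> X' \<and>
           re_integral_of \<Omega> X' \<phi>' \<and>
           degenerate_on \<Omega> X'"
proof -
  note assms = assms
  define c where "c = cos \<theta>"
  define s where "s = sin \<theta>"
  have c0: "c > 0" unfolding c_def using assms(10,11) by (intro cos_gt_zero_pi) auto
  define cc where "cc = complex_of_real c"
  define sc where "sc = complex_of_real s"
  have cc0: "cc \<noteq> 0" using c0 by (simp add: cc_def)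
  have sc2: "sc\<^sup>2 = 1 - cc\<^sup>2"
    unfolding sc_def cc_def s_def c_def
    by (metis of_real_1 of_real_diff of_real_power sin_squared_eq)
  define A where "A = (\<lambda>z. (\<phi> z $ 1 - \<i> * \<phi> z $ 2) / 2)"
  define B where "B = (\<lambda>z. - (\<phi> z $ 1 + \<i> * \<phi> z $ 2) / 2)"
  define f1 where "f1 = (\<lambda>z. sc * (A z + B z / cc\<^sup>2))"
  define f2 where "f2 = (\<lambda>z. cc * A z - B z / cc)"
  define f3 where "f3 = (\<lambda>z. \<i> * (A z + B z / cc\<^sup>2))"
  define f4 where "f4 = (\<lambda>z. \<phi> z $ 3)"
  define \<phi>' :: "complex \<Rightarrow> complex^4" where
    "\<phi>' = (\<lambda>z. \<chi> k. if k = 1 then f1 z else if k = 2 then f2 z else if k = 3 then f3 z else f4 z)"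
  have c1: "\<phi>' z $ 1 = f1 z" and c2: "\<phi>' z $ 2 = f2 z" and c3: "\<phi>' z $ 3 = f3 z"
    and c4: "\<phi>' z $ 4 = f4 z" for z by (simp_all add: \<phi>'_def)
  have hp: "(\<lambda>z. \<phi> z $ k) holomorphic_on \<Omega>" for k
    using assms(6) by (simp add: holomorphic_curve_on_def)
  have hA: "A holomorphic_on \<Omega>" unfolding A_def using hp by (auto intro!: holomorphic_intros)
  have hB: "B holomorphic_on \<Omega>" unfolding B_def using hp by (auto intro!: holomorphic_intros)
  have hf: "f1 holomorphic_on \<Omega>" "f2 holomorphic_on \<Omega>" "f3 holomorphic_on \<Omega>" "f4 holomorphic_on \<Omega>"
    unfolding f1_def f2_def f3_def f4_def using hA hB hp cc0 by (auto intro!: holomorphic_intros)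
  have hol: "(\<lambda>z. \<phi>' z $ k) holomorphic_on \<Omega>" for k
    using exhaust_4[of k] hf c1 c2 c3 c4 by auto
  then have hcurve: "holomorphic_curve_on \<phi>' \<Omega>" by (simp add: holomorphic_curve_on_def)
  have "\<forall>k. \<exists>F. \<forall>z. z \<in> \<Omega> \<longrightarrow> (F has_field_derivative \<phi>' z $ k) (at z)"
    using assms(1,3) hol simply_connected_eq_global_primitive by blast
  then obtain F where F: "\<And>k z. z \<in> \<Omega> \<Longrightarrow> (F k has_field_derivative \<phi>' z $ k) (at z)"
    by metis
  define X' :: "complex \<Rightarrow> real^4" where "X' = (\<lambda>z. \<chi> k. Re (F k z))"
  have reint: "re_integral_of \<Omega> X' \<phi>'"
    unfolding re_integral_of_def X'_def
  proof (intro ballI allI)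
    fix z k assume "z \<in> \<Omega>"
    have "((\<lambda>w. Re (F k w)) has_derivative (\<lambda>h. Re (\<phi>' z $ k * h))) (at z)"
      using has_derivative_Re[OF F[OF \<open>z \<in> \<Omega>\<close>, of k, unfolded has_field_derivative_def]]
      by (simp add: mult.commute)
    then show "((\<lambda>w. (\<chi> k. Re (F k w)) $ k) has_derivative (\<lambda>h. Re (\<phi>' z $ k * h))) (at z)"
      by simp
  qed
  have nullphi: "(\<Sum>k\<in>UNIV. (\<phi> z $ k)\<^sup>2) = 0" and nz: "\<phi> z \<noteq> 0" if z: "z \<in> \<Omega>" for z
  proof -
    have fd: "frechet_derivative X (at z) = (\<lambda>h. \<chi> k. Re (\<phi> z $ k * h))"
      using re_integral_frechet(2)[OF assms(9) z] .
    have cf: "norm (frechet_derivative X (at z) 1) = norm (frechet_derivative X (at z) \<i>)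
             \<and> frechet_derivative X (at z) 1 \<bullet> frechet_derivative X (at z) \<i> = 0
             \<and> inj (frechet_derivative X (at z))"
      using assms(8) z unfolding conformal_harmonic_immersion_def by blast
    show "(\<Sum>k\<in>UNIV. (\<phi> z $ k)\<^sup>2) = 0" using cf unfolding fd by (simp add: conf_iff)
    then show "\<phi> z \<noteq> 0" using cf inj_iff[of "\<phi> z"] unfolding fd by blast
  qed
  have nullphi': "(\<Sum>k\<in>UNIV. (\<phi>' z $ k)\<^sup>2) = 0" if z: "z \<in> \<Omega>" for z
  proof -
    have "(\<Sum>k\<in>UNIV. (\<phi>' z $ k)\<^sup>2) = (f1 z)\<^sup>2 + (f2 z)\<^sup>2 + (f3 z)\<^sup>2 + (f4 z)\<^sup>2"
      by (simp add: sum_4 c1 c2 c3 c4)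
    also have "(f1 z)\<^sup>2 = (1 - cc\<^sup>2) * (A z + B z / cc\<^sup>2)\<^sup>2"
      by (simp add: f1_def power_mult_distrib sc2)
    also have "(f3 z)\<^sup>2 = - (A z + B z / cc\<^sup>2)\<^sup>2"
      by (simp add: f3_def power_mult_distrib)
    also have "(1 - cc\<^sup>2) * (A z + B z / cc\<^sup>2)\<^sup>2 + (f2 z)\<^sup>2 + - (A z + B z / cc\<^sup>2)\<^sup>2 + (f4 z)\<^sup>2
        = -4 * A z * B z + (f4 z)\<^sup>2"
      unfolding f2_def using cc0 by (simp add: field_simps power2_eq_square)
    also have "\<dots> = (\<Sum>k\<in>UNIV. (\<phi> z $ k)\<^sup>2)"
      by (simp add: sum_3 A_def B_def f4_def field_simps power2_eq_square)
    finally show ?thesis using nullphi[OF z] by simp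
  qed
  have nz': "\<phi>' z \<noteq> 0" if z: "z \<in> \<Omega>" for z
  proof
    assume "\<phi>' z = 0"
    then have "f1 z = 0" "f2 z = 0" "f3 z = 0" "f4 z = 0" using c1 c2 c3 c4 by (metis zero_index)+
    then have e3: "A z + B z / cc\<^sup>2 = 0" and e2: "cc * A z = B z / cc" and e4: "\<phi> z $ 3 = 0"
      by (auto simp: f3_def f2_def f4_def)
    from e2 have "B z = cc\<^sup>2 * A z" using cc0 by (simp add: field_simps power2_eq_square)
    with e3 cc0 have "A z = 0" "B z = 0" by (auto simp: field_simps)
    then have "\<phi> z $ 1 = 0" "\<phi> z $ 2 = 0" unfolding A_def B_def
      by (auto simp: field_simps)
    with e4 have "\<phi> z = 0" using exhaust_3 by (metis vec_eq_iff zero_index)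
    with nz[OF z] show False by simp
  qed
  have conf: "conformal_harmonic_immersion \<Omega> X'"
    unfolding conformal_harmonic_immersion_def
  proof (intro conjI ballI allI)
    show "open \<Omega>" by (rule assms(1))
    fix z assume z: "z \<in> \<Omega>"
    have hd: "(X' has_derivative (\<lambda>h. \<chi> k. Re (\<phi>' z $ k * h))) (at z)"
      using re_integral_frechet(1)[OF reint z] .
    have fd: "frechet_derivative X' (at z) = (\<lambda>h. \<chi> k. Re (\<phi>' z $ k * h))"
      using re_integral_frechet(2)[OF reint z] .
    show "X' differentiable at z" using hd by (auto simp: differentiable_def)
    show "norm (frechet_derivative X' (at z) 1) = norm (frechet_derivative X' (at z) \<i>)"
      "frechet_derivative X' (at z) 1 \<bullet> frechet_derivative X' (at z) \<i> = 0"
      using nullphi'[OF z] unfolding fd by (simp_all add: conf_iff)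
    show "inj (frechet_derivative X' (at z))"
      using nullphi'[OF z] nz'[OF z] inj_iff[of "\<phi>' z"] unfolding fd by blast
  next
    fix k
    show "harmonic_on \<Omega> (\<lambda>z. X' z $ k)"
      unfolding X'_def using harmonic_Re_primitive[OF assms(1) hol F] by simp
  qed
  have degen: "degenerate_on \<Omega> X'"
    unfolding degenerate_on_def
  proof (intro exI[of _ "\<chi> (k::4). if k = 1 then 1 else if k = 3 then \<i> * sc else 0"] conjI ballI)
    show "(\<chi> (k::4). if k = 1 then 1 else if k = 3 then \<i> * sc else (0::complex)) \<noteq> 0"
      by (auto simp: vec_eq_iff intro!: exI[of _ 1])
    fix z assume z: "z \<in> \<Omega>"
    have fd: "frechet_derivative X' (at z) = (\<lambda>h. \<chi> k. Re (\<phi>' z $ k * h))"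
      using re_integral_frechet(2)[OF reint z] .
    have dz: "dzeta X' z $ k = \<phi>' z $ k / 2" for k
      unfolding dzeta_def fd by (simp add: complex_eq_iff)
    show "(\<Sum>k\<in>UNIV. (\<chi> (k::4). if k = 1 then 1 else if k = 3 then \<i> * sc else 0) $ k * dzeta X' z $ k) = 0"
      by (simp add: sum_4 dz c1 c3 f1_def f3_def algebra_simps add_divide_distrib[symmetric])
  qed
  have formula: "\<forall>z\<in>\<Omega>. G analytic_on {z} \<longrightarrow>
              \<phi>' z $ 1 = of_real (sin \<theta>) / 2 * (1 + (G z)\<^sup>2 / of_real ((cos \<theta>)\<^sup>2)) * \<Psi> z \<and>
              \<phi>' z $ 2 = of_real (cos \<theta>) / 2 * (1 - (G z)\<^sup>2 / of_real ((cos \<theta>)\<^sup>2)) * \<Psi> z \<and>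
              \<phi>' z $ 3 = \<i> / 2 * (1 + (G z)\<^sup>2 / of_real ((cos \<theta>)\<^sup>2)) * \<Psi> z \<and>
              \<phi>' z $ 4 = G z * \<Psi> z"
  proof (intro ballI impI)
    fix z assume z: "z \<in> \<Omega>" and an: "G analytic_on {z}"
    have p: "\<phi> z $ 1 = (1 - (G z)\<^sup>2) * \<Psi> z / 2" "\<phi> z $ 2 = \<i> * (1 + (G z)\<^sup>2) * \<Psi> z / 2"
      "\<phi> z $ 3 = G z * \<Psi> z" using assms(7) z an by auto
    have a: "A z = \<Psi> z / 2" unfolding A_def p by (simp add: field_simps power2_eq_square)
    have b: "B z = (G z)\<^sup>2 * \<Psi> z / 2" unfolding B_def p by (simp add: field_simps power2_eq_square)
    have ccd: "complex_of_real ((cos \<theta>)\<^sup>2) = cc\<^sup>2" "complex_of_real (cos \<theta>) = cc"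
      "complex_of_real (sin \<theta>) = sc" by (simp_all add: cc_def sc_def c_def s_def)
    show "\<phi>' z $ 1 = of_real (sin \<theta>) / 2 * (1 + (G z)\<^sup>2 / of_real ((cos \<theta>)\<^sup>2)) * \<Psi> z \<and>
              \<phi>' z $ 2 = of_real (cos \<theta>) / 2 * (1 - (G z)\<^sup>2 / of_real ((cos \<theta>)\<^sup>2)) * \<Psi> z \<and>
              \<phi>' z $ 3 = \<i> / 2 * (1 + (G z)\<^sup>2 / of_real ((cos \<theta>)\<^sup>2)) * \<Psi> z \<and>
              \<phi>' z $ 4 = G z * \<Psi> z"
      unfolding ccd c1 c2 c3 c4 f1_def f2_def f3_def f4_def a b p
      using cc0 by (simp add: field_simps power2_eq_square)
  qed
  show ?thesis using hcurve formula conf reint degen by blast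
qed

end
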